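(* The function $\tilde f$ is continuous at every point of $\mathbf{R}\setminus\mathbf{Q}$, and $$\lim_{x\to0^+,\ x\notin\mathbf{Q}}\tilde f(x)=1,\qquad \lim_{x\to\frac12^-,\ x\notin\mathbf{Q}}\tilde f(x)=0.$$
   Context: Let $A(y)=1/y-\lfloor 1/y\rfloor$ be the Gauss map. Define $w$ on irrationals $y\in(0,\tfrac12)$ by $w(y)=\frac{y}{2}\log\frac{1-y}{y}-\log(1-y)$, and extend $w$ to all irrationals as an even $1$-periodic function (so $w(y)=w(1-y)$ for irrational $y\in(\tfrac12,1)$); this $w$ coincides with the even part $W^+$ of the Wilton function. For irrational $x\in(0,\tfrac12)$ let $n=\lfloor 1/x\rfloor\ (\ge2)$ and define $$\Phi(x)=x\log x+xA(x)\log\bigl(xA(x)\bigr)+x\sum_{j=1}^{n-1}\log(1-jx),\qquad f(x)=-w(x)-x\,w(A(x))-\Phi(x).$$ Let $\tilde f$ be the odd $1$-periodic extension of $f$ to $\mathbf{R}\setminus\mathbf{Q}$: for irrational $x$, $\tilde f(x)=f(\{x\})$ if $\{x\}\in(0,\tfrac12)$ and $\tilde f(x)=-f(1-\{x\})$ if $\{x\}\in(\tfrac12,1)$, where $\{x\}=x-\lfloor x\rfloor$. *)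

theory Defs
  imports "HOL-Analysis.Analysis"
begin

definition gauss_map :: "real \<Rightarrow> real" where
  "gauss_map y = 1 / y - of_int \<lfloor>1 / y\<rfloor>"

definition w0 :: "real \<Rightarrow> real" where
  "w0 y = y / 2 * ln ((1 - y) / y) - ln (1 - y)"

text \<open>Even 1-periodic extension of w0 (only meaningful at irrationals).\<close>
definition wW :: "real \<Rightarrow> real" where
  "wW y = (let t = frac y in if t < 1/2 then w0 t else w0 (1 - t))"

definition Phi :: "real \<Rightarrow> real" where
  "Phi x = (let n = nat \<lfloor>1 / x\<rfloor> in
      x * ln x + x * gauss_map x * ln (x * gauss_map x)
      + x * (\<Sum>j=1..n-1. ln (1 - real j * x)))"

definition f0 :: "real \<Rightarrow> real" where
  "f0 x = - wW x - x * wW (gauss_map x) - Phi x"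

text \<open>Odd 1-periodic extension of f0 (only meaningful at irrationals).\<close>
definition ftilde :: "real \<Rightarrow> real" where
  "ftilde x = (let t = frac x in if t < 1/2 then f0 t else - f0 (1 - t))"

end

theory Submission
  imports Defs
begin

lemma irr_not_int: "(x::real) \<notin> \<rat> \<Longrightarrow> x \<notin> \<int>"
  using Ints_subset_Rats by blast

lemma irr_inv: assumes "(x::real) \<notin> \<rat>" shows "1 / x \<notin> \<rat>"
proof
  assume "1 / x \<in> \<rat>"
  from Rats_divide[OF Rats_1 this] have "1 / (1 / x) \<in> \<rat>" .
  thus False using assms by simp
qed

lemma irr_diff_int: "(x::real) \<notin> \<rat> \<Longrightarrow> x - of_int k \<notin> \<rat>"
proof
  assume "x \<notin> \<rat>" "x - of_int k \<in> \<rat>"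
  hence "(x - of_int k) + of_int k \<in> \<rat>" by (intro Rats_add) auto
  thus False using \<open>x \<notin> \<rat>\<close> by simp
qed

lemma irr_one_minus: assumes "(x::real) \<notin> \<rat>" shows "1 - x \<notin> \<rat>"
proof
  assume "1 - x \<in> \<rat>"
  from Rats_diff[OF Rats_1 this] have "1 - (1 - x) \<in> \<rat>" .
  thus False using assms by simp
qed

lemma irr_ne_half: "(x::real) \<notin> \<rat> \<Longrightarrow> x \<noteq> 1/2"
proof
  assume "x \<notin> \<rat>" "x = 1/2"
  have "(1::real) / 2 \<in> \<rat>" by (intro Rats_divide) auto
  thus False using \<open>x \<notin> \<rat>\<close> \<open>x = 1/2\<close> by simp
qed

lemma floor_ev:
  fixes g :: "'a \<Rightarrow> real"
  assumes "(g \<longlongrightarrow> c) F" "c \<notin> \<int>"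
  shows "eventually (\<lambda>y. \<lfloor>g y\<rfloor> = \<lfloor>c\<rfloor>) F"
proof -
  have "of_int \<lfloor>c\<rfloor> \<noteq> c" using assms(2) Ints_of_int by force
  hence a: "of_int \<lfloor>c\<rfloor> < c" using of_int_floor_le[of c] by linarith
  have b: "c < of_int \<lfloor>c\<rfloor> + 1" by linarith
  have "eventually (\<lambda>y. of_int \<lfloor>c\<rfloor> < g y) F" using order_tendstoD(1)[OF assms(1) a] .
  moreover have "eventually (\<lambda>y. g y < of_int \<lfloor>c\<rfloor> + 1) F" using order_tendstoD(2)[OF assms(1) b] .
  ultimately show ?thesis
    by eventually_elim (intro floor_unique, auto)
qed

lemma xlnx_lim0: "((\<lambda>u::real. u * ln u) \<longlongrightarrow> 0) (at_right 0)"
proof -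
  have s: "((\<lambda>u::real. 2 * sqrt u) \<longlongrightarrow> 0) (at_right 0)"
  proof -
    have "((\<lambda>u::real. 2 * sqrt u) \<longlongrightarrow> 2 * sqrt 0) (at_right 0)"
      by (intro tendsto_intros tendsto_ident_at)
    thus ?thesis by simp
  qed
  have ev: "eventually (\<lambda>u::real. 0 < u \<and> u < 1) (at_right 0)"
    by (simp add: eventually_at_right_field) (auto intro: exI[of _ 1])
  have b: "eventually (\<lambda>u::real. 0 \<le> - (u * ln u) \<and> - (u * ln u) \<le> 2 * sqrt u) (at_right 0)"
    using ev
  proof eventually_elim
    case (elim u)
    hence u: "0 < u" "u < 1" by auto
    have r: "0 < sqrt u" using u by simp
    have "ln (1 / sqrt u) \<le> 1 / sqrt u - 1" using r by (intro ln_le_minus_one) simp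
    moreover have "ln (1 / sqrt u) = - ln u / 2" using u by (simp add: ln_div ln_sqrt)
    ultimately have l: "- ln u \<le> 2 / sqrt u" by (simp add: field_simps)
    have "u * (- ln u) \<le> u * (2 / sqrt u)" using l u by (intro mult_left_mono) auto
    also have "u * (2 / sqrt u) = 2 * sqrt u" using u
      by (metis mult.commute real_div_sqrt times_divide_eq_right less_imp_le)
    finally have "- (u * ln u) \<le> 2 * sqrt u" by simp
    moreover have "0 \<le> - (u * ln u)" using u by (simp add: mult_nonneg_nonpos)
    ultimately show ?case by simp
  qed
  have "((\<lambda>u::real. - (u * ln u)) \<longlongrightarrow> 0) (at_right 0)"
    by (rule tendsto_sandwich[OF _ _ tendsto_const s]) (use b in \<open>auto elim: eventually_mono\<close>)
  hence "((\<lambda>u::real. - (- (u * ln u))) \<longlongrightarrow> - 0) (at_right 0)" by (rule tendsto_minus)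
  thus ?thesis by simp
qed

lemma w0_lim0: "(w0 \<longlongrightarrow> 0) (at_right 0)"
proof -
  have ev: "eventually (\<lambda>u::real. 0 < u \<and> u < 1) (at_right 0)"
    by (simp add: eventually_at_right_field) (auto intro: exI[of _ 1])
  have e: "eventually (\<lambda>y. 1/2 * (y * ln (1 - y)) - 1/2 * (y * ln y) - ln (1 - y) = w0 y) (at_right 0)"
    using ev by eventually_elim (simp add: w0_def ln_div algebra_simps)
  have c: "((\<lambda>y::real. y * ln (1 - y)) \<longlongrightarrow> 0 * ln (1 - 0)) (at_right 0)"
    by (intro tendsto_intros tendsto_ident_at) auto
  have c2: "((\<lambda>y::real. ln (1 - y)) \<longlongrightarrow> ln (1 - 0)) (at_right 0)"
    by (intro tendsto_intros tendsto_ident_at) auto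
  have "((\<lambda>y::real. 1/2 * (y * ln (1 - y)) - 1/2 * (y * ln y) - ln (1 - y)) \<longlongrightarrow> 1/2 * 0 - 1/2 * 0 - 0) (at_right 0)"
  proof -
    have c': "((\<lambda>y::real. y * ln (1 - y)) \<longlongrightarrow> 0) (at_right 0)" using c by simp
    have c2': "((\<lambda>y::real. ln (1 - y)) \<longlongrightarrow> 0) (at_right 0)" using c2 by simp
    show ?thesis using tendsto_diff[OF tendsto_diff[OF tendsto_mult_left[OF c', of "1/2"] tendsto_mult_left[OF xlnx_lim0, of "1/2"]] c2'] by simp
  qed
  hence "((\<lambda>y::real. 1/2 * (y * ln (1 - y)) - 1/2 * (y * ln y) - ln (1 - y)) \<longlongrightarrow> 0) (at_right 0)" by simp
  thus ?thesis using e by (rule Lim_transform_eventually)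
qed

definition FF :: "real \<Rightarrow> real" where "FF t = - (1 - t) * ln (1 - t) - t"

lemma GG_lim: "((\<lambda>u::real. - u * ln u - (1 - u)) \<longlongrightarrow> -1) (at_right 0)"
proof -
  have "((\<lambda>u::real. - (u * ln u) - (1 - u)) \<longlongrightarrow> - 0 - (1 - 0)) (at_right 0)"
    by (intro tendsto_intros xlnx_lim0 tendsto_ident_at)
  thus ?thesis by simp
qed

lemma FF_lim: "(FF \<longlongrightarrow> 0) (at_right 0)"
proof -
  have "(FF \<longlongrightarrow> - (1 - 0) * ln (1 - 0) - 0) (at_right 0)"
    unfolding FF_def[abs_def] by (intro tendsto_intros tendsto_ident_at) auto
  thus ?thesis by simp
qed

lemma ylny_lim: "((\<lambda>y::real. y * ln y) \<longlongrightarrow> 0) (at_right 0)"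
  by (rule xlnx_lim0)

lemma half_lim: "((\<lambda>y::real. - w0 y - (y * ln y + (1 - 2*y) * ln (1 - 2*y) + y * ln (1 - y))) \<longlongrightarrow> 0) (at_left (1/2))"
proof -
  have id: "((\<lambda>y::real. y) \<longlongrightarrow> 1/2) (at_left (1/2))" by (rule tendsto_ident_at)
  have w: "(w0 \<longlongrightarrow> w0 (1/2)) (at_left (1/2))"
    unfolding w0_def[abs_def] by (intro tendsto_intros id) auto
  have w2: "w0 (1/2) = ln 2" by (simp add: w0_def ln_div)
  have u0: "((\<lambda>y::real. 1 - 2*y) \<longlongrightarrow> 0) (at_left (1/2))"
    using tendsto_diff[OF tendsto_const tendsto_mult_left[OF id, of 2], of 1] by simp
  have ur: "filterlim (\<lambda>y::real. 1 - 2*y) (at_right 0) (at_left (1/2))"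
    by (rule tendsto_imp_filterlim_at_right[OF u0]) (simp add: eventually_at_left_field, auto intro: exI[of _ 0])
  have m: "((\<lambda>y::real. (1 - 2*y) * ln (1 - 2*y)) \<longlongrightarrow> 0) (at_left (1/2))"
    using filterlim_compose[OF xlnx_lim0 ur] by simp
  have "((\<lambda>y::real. - w0 y - (y * ln y + (1 - 2*y) * ln (1 - 2*y) + y * ln (1 - y))) \<longlongrightarrow>
      - ln 2 - (1/2 * ln (1/2) + 0 + 1/2 * ln (1 - 1/2))) (at_left (1/2))"
    using w unfolding w2 by (intro tendsto_intros id m) auto
  thus ?thesis by (simp add: ln_div)
qed

lemma w0_bound: assumes "0 \<le> t" "t \<le> 1/2" shows "0 \<le> w0 t \<and> w0 t \<le> 2"
proof (cases "t = 0")
  case True thus ?thesis by (simp add: w0_def)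
next
  case False
  hence t: "0 < t" using assms by auto
  have q: "1 \<le> (1 - t) / t" using t assms by (simp add: field_simps)
  have l1: "0 \<le> ln ((1-t)/t)" using q by simp
  have l2: "ln ((1-t)/t) \<le> (1-t)/t" using ln_le_minus_one[of "(1-t)/t"] q by linarith
  have l3: "t/2 * ln ((1-t)/t) \<le> t/2 * ((1-t)/t)" using l2 t by (intro mult_left_mono) auto
  have l4: "t/2 * ((1-t)/t) \<le> 1/2" using t assms by (simp add: field_simps)
  have l5: "0 \<le> - ln (1 - t)" using t assms by simp
  have l6: "- ln (1 - t) \<le> ln 2"
  proof -
    have "1/2 \<le> 1 - t" using assms by simp
    hence "ln (1/2) \<le> ln (1 - t)" by (subst ln_le_cancel_iff) auto
    thus ?thesis by (simp add: ln_div)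
  qed
  have "ln (2::real) \<le> 1" using ln_le_minus_one[of 2] by simp
  moreover have "0 \<le> t/2 * ln ((1-t)/t)" using l1 t by simp
  ultimately show ?thesis using l3 l4 l5 l6 unfolding w0_def by linarith
qed

lemma wW_bound: "0 \<le> wW y \<and> wW y \<le> 2"
proof -
  have "0 \<le> frac y" "frac y < 1" by (auto simp: frac_lt_1)
  thus ?thesis unfolding wW_def Let_def using w0_bound by auto
qed

lemma nhds_tendsto: assumes "isCont f x" shows "(f \<longlongrightarrow> f x) (nhds x)"
  using assms unfolding isCont_def tendsto_at_iff_tendsto_nhds .

lemma frac_ev: assumes "(y0::real) \<notin> \<int>"
  shows "eventually (\<lambda>y. frac y = y - of_int \<lfloor>y0\<rfloor>) (nhds y0)"
proof -
  have "eventually (\<lambda>y. \<lfloor>y\<rfloor> = \<lfloor>y0\<rfloor>) (nhds y0)"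
    using floor_ev[OF tendsto_ident_at[of y0 UNIV] assms] floor_ev[of "\<lambda>y. y" y0 "nhds y0"] assms
    by (simp add: filterlim_ident)
  thus ?thesis by eventually_elim (simp add: frac_def)
qed

lemma gm_cont: assumes "(x::real) \<notin> \<rat>" shows "isCont gauss_map x"
proof -
  have x0: "x \<noteq> 0" using assms by auto
  have c: "isCont (\<lambda>y. 1 / y) x" using x0 by (intro continuous_intros) auto
  have "eventually (\<lambda>y. \<lfloor>1/y\<rfloor> = \<lfloor>1/x\<rfloor>) (nhds x)"
    using floor_ev[OF nhds_tendsto[OF c]] irr_not_int[OF irr_inv[OF assms]] by simp
  hence ev: "eventually (\<lambda>y. gauss_map y = 1/y - of_int \<lfloor>1/x\<rfloor>) (nhds x)"
    by eventually_elim (simp add: gauss_map_def)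
  have "isCont (\<lambda>y. 1/y - of_int \<lfloor>1/x\<rfloor>) x" using c x0 by (intro continuous_intros) auto
  thus ?thesis using isCont_cong[OF ev] by simp
qed

lemma gm_props: assumes "(x::real) \<notin> \<rat>"
  shows "gauss_map x = frac (1/x)" "gauss_map x \<notin> \<rat>" "0 < gauss_map x" "gauss_map x < 1"
proof -
  show g: "gauss_map x = frac (1/x)" by (simp add: gauss_map_def frac_def)
  show "gauss_map x \<notin> \<rat>" unfolding gauss_map_def using irr_diff_int[OF irr_inv[OF assms]] by simp
  show "0 < gauss_map x" using g irr_not_int[OF irr_inv[OF assms]] frac_ge_0[of "1/x"] frac_eq_0_iff[of "1/x"]
    by linarith
  show "gauss_map x < 1" using g frac_lt_1 by simp
qed

lemma w0_cont: "0 < t \<Longrightarrow> t < 1 \<Longrightarrow> isCont w0 t"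
  unfolding w0_def by (intro continuous_intros) auto

lemma frac_props: assumes "(x::real) \<notin> \<rat>" shows "0 < frac x" "frac x < 1" "frac x \<noteq> 1/2" "frac x \<notin> \<rat>"
proof -
  show "frac x \<notin> \<rat>" unfolding frac_def using irr_diff_int[OF assms] by simp
  thus "frac x \<noteq> 1/2" using irr_ne_half by blast
  show "0 < frac x" using irr_not_int[OF assms] frac_ge_0[of x] frac_eq_0_iff[of x] by linarith
  show "frac x < 1" by (simp add: frac_lt_1)
qed

lemma wW_cont: assumes "(y0::real) \<notin> \<rat>" shows "isCont wW y0"
proof -
  define k where "k = \<lfloor>y0\<rfloor>"
  have fe: "eventually (\<lambda>y. frac y = y - of_int k) (nhds y0)"
    using frac_ev[OF irr_not_int[OF assms]] k_def by simp
  have t0: "frac y0 = y0 - of_int k" by (simp add: k_def frac_def)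
  note fp = frac_props[OF assms]
  have ct: "((\<lambda>y. y - of_int k) \<longlongrightarrow> y0 - of_int k) (nhds y0)"
    by (intro tendsto_intros filterlim_ident)
  show ?thesis
  proof (cases "frac y0 < 1/2")
    case True
    have "y0 - of_int k < 1/2" using True t0 by simp
    from order_tendstoD(2)[OF ct this] fe have ev: "eventually (\<lambda>y. wW y = w0 (y - of_int k)) (nhds y0)"
      by eventually_elim (simp add: wW_def Let_def)
    have "isCont (\<lambda>y. w0 (y - of_int k)) y0"
      by (rule isCont_o2[OF _ w0_cont]) (use fp t0 in \<open>auto intro!: continuous_intros\<close>)
    thus ?thesis using isCont_cong[OF ev] by simp
  next
    case False
    hence F: "frac y0 > 1/2" using fp by auto
    have "y0 - of_int k > 1/2" using F t0 by simp
    from order_tendstoD(1)[OF ct this] fe have ev: "eventually (\<lambda>y. wW y = w0 (1 - (y - of_int k))) (nhds y0)"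
      by eventually_elim (simp add: wW_def Let_def)
    have "isCont (\<lambda>y. w0 (1 - (y - of_int k))) y0"
      by (rule isCont_o2[OF _ w0_cont]) (use fp t0 in \<open>auto intro!: continuous_intros\<close>)
    thus ?thesis using isCont_cong[OF ev] by simp
  qed
qed

lemma floor_inv_bound: assumes "0 < (x::real)" "j \<le> nat \<lfloor>1/x\<rfloor> - 1" "1 \<le> j"
  shows "real j * x < 1"
proof -
  have "0 \<le> \<lfloor>1/x\<rfloor>" using assms(1) by simp
  hence "real (nat \<lfloor>1/x\<rfloor>) \<le> 1/x" by (simp add: of_nat_nat)
  hence "real (nat \<lfloor>1/x\<rfloor>) * x \<le> (1/x) * x" using assms(1) by (intro mult_right_mono) auto
  hence "real (nat \<lfloor>1/x\<rfloor>) * x \<le> 1" using assms(1) by simp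
  moreover have "real j < real (nat \<lfloor>1/x\<rfloor>)" using assms(2,3) by simp
  moreover have "real j * x < real (nat \<lfloor>1/x\<rfloor>) * x"
    using \<open>real j < real (nat \<lfloor>1/x\<rfloor>)\<close> assms(1) by (rule mult_strict_right_mono)
  ultimately show ?thesis by linarith
qed

lemma Phi_cont: assumes "(x::real) \<notin> \<rat>" "0 < x" shows "isCont Phi x"
proof -
  define n0 where "n0 = nat \<lfloor>1/x\<rfloor>"
  have c: "isCont (\<lambda>y. 1 / y) x" using assms by (intro continuous_intros) auto
  have "eventually (\<lambda>y. \<lfloor>1/y\<rfloor> = \<lfloor>1/x\<rfloor>) (nhds x)"
    using floor_ev[OF nhds_tendsto[OF c]] irr_not_int[OF irr_inv[OF assms(1)]] by simp
  hence ev: "eventually (\<lambda>y. Phi y = y * ln y + y * gauss_map y * ln (y * gauss_map y)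
      + y * (\<Sum>j=1..n0-1. ln (1 - real j * y))) (nhds x)"
    by eventually_elim (simp add: Phi_def n0_def)
  have pos: "0 < x * gauss_map x" using gm_props[OF assms(1)] assms by simp
  have js: "\<And>j. j \<in> {1..n0-1} \<Longrightarrow> 0 < 1 - real j * x"
    using floor_inv_bound[OF assms(2)] n0_def by fastforce
  have js_ne: "\<And>j. Suc 0 \<le> j \<Longrightarrow> j \<le> n0 - Suc 0 \<Longrightarrow> (real j * x = 1) = False"
    using floor_inv_bound[OF assms(2)] n0_def by fastforce
  have "isCont (\<lambda>y. y * ln y + y * gauss_map y * ln (y * gauss_map y)
      + y * (\<Sum>j=1..n0-1. ln (1 - real j * y))) x"
    using assms pos gm_cont[OF assms(1)]
    by (intro continuous_intros) (auto simp: js_ne)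
  thus ?thesis using isCont_cong[OF ev] by simp
qed

lemma f0_cont: assumes "(x::real) \<notin> \<rat>" "0 < x" shows "isCont f0 x"
proof -
  have "isCont (\<lambda>y. - wW y - y * wW (gauss_map y) - Phi y) x"
    using wW_cont[OF assms(1)] Phi_cont[OF assms] isCont_o2[OF gm_cont[OF assms(1)] wW_cont[OF gm_props(2)[OF assms(1)]]]
    by (intro continuous_intros) auto
  thus ?thesis unfolding f0_def[abs_def] by simp
qed

lemma ftilde_cont: assumes "(y0::real) \<notin> \<rat>" shows "isCont ftilde y0"
proof -
  define k where "k = \<lfloor>y0\<rfloor>"
  have fe: "eventually (\<lambda>y. frac y = y - of_int k) (nhds y0)"
    using frac_ev[OF irr_not_int[OF assms]] k_def by simp
  have t0: "frac y0 = y0 - of_int k" by (simp add: k_def frac_def)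
  note fp = frac_props[OF assms]
  have ct: "((\<lambda>y. y - of_int k) \<longlongrightarrow> y0 - of_int k) (nhds y0)"
    by (intro tendsto_intros filterlim_ident)
  show ?thesis
  proof (cases "frac y0 < 1/2")
    case True
    have "y0 - of_int k < 1/2" using True t0 by simp
    from order_tendstoD(2)[OF ct this] fe have ev: "eventually (\<lambda>y. ftilde y = f0 (y - of_int k)) (nhds y0)"
      by eventually_elim (simp add: ftilde_def Let_def)
    have "isCont (\<lambda>y. f0 (y - of_int k)) y0"
      by (rule isCont_o2[OF _ f0_cont]) (use fp t0 in \<open>auto intro!: continuous_intros\<close>)
    thus ?thesis using isCont_cong[OF ev] by simp
  next
    case False
    hence F: "frac y0 > 1/2" using fp by auto
    have "y0 - of_int k > 1/2" using F t0 by simp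
    from order_tendstoD(1)[OF ct this] fe have ev: "eventually (\<lambda>y. ftilde y = - f0 (1 - (y - of_int k))) (nhds y0)"
      by eventually_elim (simp add: ftilde_def Let_def)
    have "isCont (\<lambda>y. f0 (1 - (y - of_int k))) y0"
      by (rule isCont_o2[OF _ f0_cont]) (use fp t0 irr_one_minus[OF fp(4)] in \<open>auto intro!: continuous_intros\<close>)
    hence "isCont (\<lambda>y. - f0 (1 - (y - of_int k))) y0" by (intro continuous_intros)
    thus ?thesis using isCont_cong[OF ev] by simp
  qed
qed


lemma FF_deriv: "t < 1 \<Longrightarrow> (FF has_real_derivative ln (1 - t)) (at t)"
  unfolding FF_def[abs_def]
  by (rule derivative_eq_intros refl | simp)+ (simp add: field_simps)

lemma FF_mvt: assumes "0 \<le> a" "a < b" "b < 1"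
  shows "(b - a) * ln (1 - b) \<le> FF b - FF a" "FF b - FF a \<le> (b - a) * ln (1 - a)"
proof -
  have d: "\<And>t. a \<le> t \<Longrightarrow> t \<le> b \<Longrightarrow> (FF has_real_derivative ln (1 - t)) (at t)"
    using FF_deriv assms by simp
  obtain z where z: "a < z" "z < b" "FF b - FF a = (b - a) * ln (1 - z)"
    using MVT2[OF assms(2) d] by blast
  have "ln (1 - b) \<le> ln (1 - z)" using z assms by simp
  thus "(b - a) * ln (1 - b) \<le> FF b - FF a" using z assms by (simp add: mult_left_mono)
  have "ln (1 - z) \<le> ln (1 - a)" using z assms by simp
  thus "FF b - FF a \<le> (b - a) * ln (1 - a)" using z assms by (simp add: mult_left_mono)
qed

lemma sum_upper: assumes "0 < x" shows "real m * x < 1 \<Longrightarrow> (\<Sum>j=1..m. x * ln (1 - real j * x)) \<le> FF (real m * x)"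
proof (induction m)
  case 0 thus ?case by (simp add: FF_def)
next
  case (Suc m)
  have "(\<Sum>j=1..Suc m. x * ln (1 - real j * x)) = (\<Sum>j=1..m. x * ln (1 - real j * x)) + x * ln (1 - real (Suc m) * x)"
    by simp
  also have "\<dots> \<le> FF (real m * x) + (FF (real (Suc m) * x) - FF (real m * x))"
  proof (intro add_mono)
    show "(\<Sum>j=1..m. x * ln (1 - real j * x)) \<le> FF (real m * x)"
      using Suc assms by (intro Suc.IH) (simp add: algebra_simps)
    show "x * ln (1 - real (Suc m) * x) \<le> FF (real (Suc m) * x) - FF (real m * x)"
      using FF_mvt(1)[of "real m * x" "real (Suc m) * x"] Suc.prems assms by (simp add: algebra_simps)
  qed
  finally show ?case by simp
qed

lemma sum_lower: assumes "0 < x" shows "real (m + 1) * x < 1 \<Longrightarrow> FF (real (m + 1) * x) - FF x \<le> (\<Sum>j=1..m. x * ln (1 - real j * x))"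
proof (induction m)
  case 0 thus ?case by simp
next
  case (Suc m)
  have "FF (real (Suc m + 1) * x) - FF x = (FF (real (m + 1) * x) - FF x) + (FF (real (Suc m + 1) * x) - FF (real (m+1) * x))"
    by simp
  also have "\<dots> \<le> (\<Sum>j=1..m. x * ln (1 - real j * x)) + x * ln (1 - real (Suc m) * x)"
  proof (intro add_mono)
    show "FF (real (m + 1) * x) - FF x \<le> (\<Sum>j=1..m. x * ln (1 - real j * x))"
      using Suc assms by (intro Suc.IH) (simp add: algebra_simps)
    show "FF (real (Suc m + 1) * x) - FF (real (m+1) * x) \<le> x * ln (1 - real (Suc m) * x)"
      using FF_mvt(2)[of "real (m+1) * x" "real (Suc m + 1) * x"] Suc.prems assms by (simp add: algebra_simps)
  qed
  also have "\<dots> = (\<Sum>j=1..Suc m. x * ln (1 - real j * x))" by simp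
  finally show ?case .
qed

lemma small_facts: assumes "(y::real) \<notin> \<rat>" "0 < y" "y < 1/2"
  shows "2 \<le> nat \<lfloor>1/y\<rfloor>" "y * gauss_map y = 1 - real (nat \<lfloor>1/y\<rfloor>) * y"
        "0 < y * gauss_map y" "y * gauss_map y < y"
proof -
  have "2 < 1/y" using assms by (simp add: field_simps)
  hence fl: "2 \<le> \<lfloor>1/y\<rfloor>" by (simp add: le_floor_iff)
  hence "nat 2 \<le> nat \<lfloor>1/y\<rfloor>" by (rule nat_mono)
  thus "2 \<le> nat \<lfloor>1/y\<rfloor>" by simp
  have "real (nat \<lfloor>1/y\<rfloor>) = of_int \<lfloor>1/y\<rfloor>" using fl by (intro of_nat_nat) linarith
  thus "y * gauss_map y = 1 - real (nat \<lfloor>1/y\<rfloor>) * y" using assms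
    by (simp add: gauss_map_def algebra_simps)
  show "0 < y * gauss_map y" "y * gauss_map y < y" using gm_props[OF assms(1)] assms by auto
qed

lemma lim_zero: "(ftilde \<longlongrightarrow> 1) (at 0 within ({0<..} - \<rat>))"
proof -
  define F0 where "F0 = at (0::real) within ({0<..} - \<rat>)"
  define p where "p y = y * gauss_map y" for y
  define S where "S y = y * (\<Sum>j=1..nat \<lfloor>1/y\<rfloor> - 1. ln (1 - real j * y))" for y
  define GG where "GG u = - u * ln u - (1 - u)" for u :: real
  have sub: "{0<..} - \<rat> \<subseteq> {0::real<..}" by auto
  have lift: "(g \<longlongrightarrow> l) F0" if "(g \<longlongrightarrow> l) (at_right 0)" for g :: "real \<Rightarrow> real" and l
    unfolding F0_def using tendsto_within_subset[OF that sub] .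
  have idl: "((\<lambda>y. y) \<longlongrightarrow> 0) F0" unfolding F0_def by (rule tendsto_ident_at)
  have ev1: "eventually (\<lambda>y. y \<in> {0<..} - \<rat>) F0"
    unfolding F0_def eventually_at_filter by simp
  have ev2: "eventually (\<lambda>y. y < 1/2) F0" using order_tendstoD(2)[OF idl, of "1/2"] by simp
  have ev: "eventually (\<lambda>y. ftilde y = - w0 y - y * wW (gauss_map y) - (y * ln y + p y * ln (p y) + S y)
      \<and> GG (p y) - FF y \<le> S y \<and> S y \<le> GG (p y + y) \<and> 0 < p y \<and> p y < y
      \<and> 0 \<le> y * wW (gauss_map y) \<and> y * wW (gauss_map y) \<le> 2 * y) F0"
    using ev1 ev2
  proof eventually_elim
    case (elim y)
    hence y: "y \<notin> \<rat>" "0 < y" "y < 1/2" by auto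
    note sf = small_facts[OF y]
    define n where "n = nat \<lfloor>1/y\<rfloor>"
    have fr: "frac y = y" using y by (simp add: frac_eq)
    have e1: "ftilde y = f0 y" unfolding ftilde_def Let_def fr using y by simp
    have e2: "wW y = w0 y" unfolding wW_def Let_def fr using y by simp
    have e3: "Phi y = y * ln y + p y * ln (p y) + S y"
      unfolding Phi_def Let_def p_def S_def by (simp only: mult.assoc)
    have "ftilde y = - w0 y - y * wW (gauss_map y) - (y * ln y + p y * ln (p y) + S y)"
      unfolding e1 f0_def e2 e3 by simp
    moreover have pn: "p y = 1 - real n * y" using sf p_def n_def by simp
    have Ssum: "S y = (\<Sum>j=1..n-1. y * ln (1 - real j * y))"
      unfolding S_def n_def by (simp add: sum_distrib_left)
    have n2: "2 \<le> n" using sf n_def by simp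
    have "real (n - 1 + 1) * y < 1" using n2 pn sf(3) p_def by simp
    from sum_lower[OF y(2) this]
    have L1: "FF (real n * y) - FF y \<le> S y" using n2 Ssum by simp
    have L2: "FF (real n * y) = GG (p y)" unfolding FF_def GG_def pn by simp
    have "real (n - 1) * y = real n * y - y" using n2 by (simp add: of_nat_diff algebra_simps)
    hence "real (n - 1) * y < 1" using pn sf(3) p_def y(2) by simp
    from sum_upper[OF y(2) this]
    have L3: "S y \<le> FF (real (n-1) * y)" using Ssum by simp
    have L4: "FF (real (n-1) * y) = GG (p y + y)"
      unfolding FF_def GG_def pn using n2 by (simp add: of_nat_diff algebra_simps)
    have L5: "0 \<le> y * wW (gauss_map y)" "y * wW (gauss_map y) \<le> 2 * y"
      using wW_bound[of "gauss_map y"] y by (auto intro: mult_left_mono)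
    note L = L1 L2 L3 L4 L5
    ultimately show ?case using sf p_def L by simp
  qed
  have p0: "(p \<longlongrightarrow> 0) F0"
    by (rule tendsto_sandwich[OF _ _ tendsto_const idl]) (use ev in \<open>auto elim: eventually_mono\<close>)
  have pr: "filterlim p (at_right 0) F0"
    by (rule tendsto_imp_filterlim_at_right[OF p0]) (use ev in \<open>auto elim: eventually_mono\<close>)
  have py0: "((\<lambda>y. p y + y) \<longlongrightarrow> 0) F0" using tendsto_add[OF p0 idl] by simp
  have pyr: "filterlim (\<lambda>y. p y + y) (at_right 0) F0"
    by (rule tendsto_imp_filterlim_at_right[OF py0]) (use ev in \<open>auto elim: eventually_mono\<close>)
  have G1: "((\<lambda>y. GG (p y)) \<longlongrightarrow> -1) F0"
    using filterlim_compose[OF GG_lim pr] unfolding GG_def by simp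
  have G2: "((\<lambda>y. GG (p y + y)) \<longlongrightarrow> -1) F0"
    using filterlim_compose[OF GG_lim pyr] unfolding GG_def by simp
  have lo: "((\<lambda>y. GG (p y) - FF y) \<longlongrightarrow> -1) F0"
    using tendsto_diff[OF G1 lift[OF FF_lim]] by simp
  have Sl: "(S \<longlongrightarrow> -1) F0"
    by (rule tendsto_sandwich[OF _ _ lo G2]) (use ev in \<open>auto elim: eventually_mono\<close>)
  have pl: "((\<lambda>y. p y * ln (p y)) \<longlongrightarrow> 0) F0"
    using filterlim_compose[OF xlnx_lim0 pr] by simp
  have t2: "((\<lambda>y. 2 * y) \<longlongrightarrow> 0) F0" using tendsto_mult_left[OF idl, of 2] by simp
  have wl: "((\<lambda>y. y * wW (gauss_map y)) \<longlongrightarrow> 0) F0"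
    by (rule tendsto_sandwich[OF _ _ tendsto_const t2]) (use ev in \<open>auto elim: eventually_mono\<close>)
  have "((\<lambda>y. - w0 y - y * wW (gauss_map y) - (y * ln y + p y * ln (p y) + S y)) \<longlongrightarrow>
        - 0 - 0 - (0 + 0 + -1)) F0"
    by (intro tendsto_intros lift[OF w0_lim0] wl lift[OF ylny_lim] pl Sl)
  hence "((\<lambda>y. - w0 y - y * wW (gauss_map y) - (y * ln y + p y * ln (p y) + S y)) \<longlongrightarrow> 1) F0"
    by simp
  moreover have "eventually (\<lambda>y. - w0 y - y * wW (gauss_map y) - (y * ln y + p y * ln (p y) + S y) = ftilde y) F0"
    using ev by (auto elim: eventually_mono)
  ultimately have "(ftilde \<longlongrightarrow> 1) F0" by (rule Lim_transform_eventually)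
  thus ?thesis unfolding F0_def .
qed

lemma lim_half: "(ftilde \<longlongrightarrow> 0) (at (1/2) within ({..<1/2} - \<rat>))"
proof -
  define F1 where "F1 = at (1/2::real) within ({..<1/2} - \<rat>)"
  define H where "H y = - w0 y - (y * ln y + (1 - 2*y) * ln (1 - 2*y) + y * ln (1 - y))" for y :: real
  have sub: "{..<1/2} - \<rat> \<subseteq> {..<1/2::real}" by auto
  have lift: "(g \<longlongrightarrow> l) F1" if "(g \<longlongrightarrow> l) (at_left (1/2))" for g :: "real \<Rightarrow> real" and l
    unfolding F1_def using tendsto_within_subset[OF that sub] .
  have idl: "((\<lambda>y. y) \<longlongrightarrow> 1/2) F1" unfolding F1_def by (rule tendsto_ident_at)
  have ev1: "eventually (\<lambda>y. y \<in> {..<1/2} - \<rat>) F1"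
    unfolding F1_def eventually_at_filter by simp
  have ev2: "eventually (\<lambda>y. 2/5 < y) F1" using order_tendstoD(1)[OF idl, of "2/5"] by simp
  have ev: "eventually (\<lambda>y. ftilde y = H y - y * w0 (1/y - 2) \<and> 0 < 1/y - 2) F1"
    using ev1 ev2
  proof eventually_elim
    case (elim y)
    hence y: "y \<notin> \<rat>" "2/5 < y" "y < 1/2" by auto
    have y0: "0 < y" using y by simp
    have a: "2 < 1/y" using y by (simp add: field_simps)
    have b: "1/y < 5/2" using y by (simp add: field_simps)
    have fl: "\<lfloor>1/y\<rfloor> = 2" using a b by (intro floor_unique) auto
    have gm: "gauss_map y = 1/y - 2" by (simp add: gauss_map_def fl)
    have g1: "0 < 1/y - 2" "1/y - 2 < 1/2" using a b by auto
    have frg: "frac (1/y - 2) = 1/y - 2" using g1 by (simp add: frac_eq)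
    have fr: "frac y = y" using y by (simp add: frac_eq)
    have pg: "y * (1/y - 2) = 1 - 2 * y" using y0 by (simp add: field_simps)
    have e1: "ftilde y = f0 y" unfolding ftilde_def Let_def fr using y by simp
    have e2: "wW y = w0 y" unfolding wW_def Let_def fr using y by simp
    have e3: "wW (gauss_map y) = w0 (1/y - 2)" unfolding wW_def Let_def gm frg using g1 by simp
    have e4: "Phi y = y * ln y + (1 - 2*y) * ln (1 - 2*y) + y * ln (1 - y)"
      unfolding Phi_def Let_def fl gm pg by simp
    have "ftilde y = H y - y * w0 (1/y - 2)"
      unfolding e1 f0_def e2 e3 e4 H_def by simp
    thus ?case using g1 by simp
  qed
  have g0: "((\<lambda>y. 1/y - 2) \<longlongrightarrow> 0) F1"
    using tendsto_diff[OF tendsto_divide[OF tendsto_const idl] tendsto_const, of 1 2] by simp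
  have gr: "filterlim (\<lambda>y. 1/y - 2) (at_right 0) F1"
    by (rule tendsto_imp_filterlim_at_right[OF g0]) (use ev in \<open>auto elim: eventually_mono\<close>)
  have wl: "((\<lambda>y. w0 (1/y - 2)) \<longlongrightarrow> 0) F1"
    using filterlim_compose[OF w0_lim0 gr] .
  have "((\<lambda>y. H y - y * w0 (1/y - 2)) \<longlongrightarrow> 0 - 1/2 * 0) F1"
    using lift[OF half_lim] unfolding H_def[symmetric] by (intro tendsto_intros idl wl) 
  hence "((\<lambda>y. H y - y * w0 (1/y - 2)) \<longlongrightarrow> 0) F1" by simp
  moreover have "eventually (\<lambda>y. H y - y * w0 (1/y - 2) = ftilde y) F1"
    using ev by (auto elim: eventually_mono)
  ultimately have "(ftilde \<longlongrightarrow> 0) F1" by (rule Lim_transform_eventually)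
  thus ?thesis unfolding F1_def .
qed

theorem mainTheorem6:
  shows "(\<forall>x. x \<notin> \<rat> \<longrightarrow> continuous (at x within (- \<rat>)) ftilde)
    \<and> (ftilde \<longlongrightarrow> 1) (at 0 within ({0<..} - \<rat>))
    \<and> (ftilde \<longlongrightarrow> 0) (at (1/2) within ({..<1/2} - \<rat>))"
proof -
  have A: "\<forall>x. x \<notin> \<rat> \<longrightarrow> continuous (at x within (- \<rat>)) ftilde"
  proof (intro allI impI)
    fix x :: real assume h: "x \<notin> \<rat>"
    show "continuous (at x within (- \<rat>)) ftilde"
      using continuous_at_imp_continuous_at_within[OF ftilde_cont[OF h]] .
  qed
  show ?thesis by (rule conjI[OF A conjI[OF lim_zero lim_half]])
qed

end
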